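(* With notation as in the context (type $E_6$ over $\mathbb{Z}/3$), let $s\in\{1,3,4,5,6\}$ and let $x\ne y$ be elements of $\Gamma_s^+$. Then $(x|y)=0$ if and only if $x$ and $y$ agree in exactly one of their five coordinates.
   Context: Let $V=(\mathbb{Z}/3)^5$ with the standard symmetric form $\sum_i x_iy_i$. Let $\Delta$ be the root system of type $E_6$ with simple roots $\alpha_1,\dots,\alpha_6$, $\langle\alpha_i,\alpha_i\rangle=2$, $\langle\alpha_i,\alpha_j\rangle=-1$ if $\{i,j\}\in\{\{1,3\},\{3,4\},\{4,5\},\{5,6\},\{2,4\}\}$, $0$ otherwise; $\Lambda=\bigoplus\mathbb{Z}\alpha_i$, $\Delta^+$ the positive roots. Let $f:\Lambda\to V$ be the group homomorphism with $f(\alpha_1)=(1,2,0,0,0)$, $f(\alpha_2)=(0,0,0,1,2)$, $f(\alpha_3)=(0,1,2,0,0)$, $f(\alpha_4)=(0,0,1,2,0)$, $f(\alpha_5)=(0,0,0,1,1)$, $f(\alpha_6)=(1,1,1,1,1)$. For $\beta=\sum\beta^i\alpha_i\in\Delta^+$ let $m(\beta)=\max\{i:\beta^i\ne0\}$; set $\Delta_1^+=\{\alpha_1\}$, $\Delta_3^+=\{\beta: m(\beta)\in\{2,3\}\}$, $\Delta_s^+=\{\beta: m(\beta)=s\}$ for $s=4,5,6$, and $\Gamma_s^+=f(\Delta_s^+)$. *)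

theory Defs
  imports Main
begin

(* Elements of the root lattice Lambda = (+) Z alpha_i are represented by their
   coefficient functions c :: nat => int, with c i the coefficient of alpha_i
   (i = 1..6) and c i = 0 for i outside {1..6}. *)

definition lattice :: "(nat \<Rightarrow> int) set" where
  "lattice = {c. \<forall>i. i \<notin> {1..6} \<longrightarrow> c i = 0}"

(* Gram matrix of the simple roots of E6 (Bourbaki labelling as in the context) *)
definition gram :: "nat \<Rightarrow> nat \<Rightarrow> int" where
  "gram i j = (if i = j then 2
     else if {i,j} \<in> {{1,3},{3,4},{4,5},{5,6},{2,4}} then -1 else 0)"

definition lform :: "(nat \<Rightarrow> int) \<Rightarrow> (nat \<Rightarrow> int) \<Rightarrow> int" where
  "lform b c = (\<Sum>i=1..6. \<Sum>j=1..6. b i * c j * gram i j)"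

definition alpha :: "nat \<Rightarrow> nat \<Rightarrow> int" where
  "alpha i = (\<lambda>j. if j = i then 1 else 0)"

definition E6_roots :: "(nat \<Rightarrow> int) set" where
  "E6_roots = {c \<in> lattice. lform c c = 2}"

definition E6_pos_roots :: "(nat \<Rightarrow> int) set" where
  "E6_pos_roots = {c \<in> E6_roots. \<forall>i. c i \<ge> 0}"

definition mroot :: "(nat \<Rightarrow> int) \<Rightarrow> nat" where
  "mroot b = Max {i \<in> {1..6}. b i \<noteq> 0}"

definition Delta_s :: "nat \<Rightarrow> (nat \<Rightarrow> int) set" where
  "Delta_s s = (if s = 1 then {alpha 1}
     else if s = 3 then {b \<in> E6_pos_roots. mroot b \<in> {2,3}}
     else {b \<in> E6_pos_roots. mroot b = s})"

(* V = (Z/3)^5 represented as int lists of length 5 with entries in {0,1,2};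
   coordinates indexed 0..4 *)
definition fimg :: "nat \<Rightarrow> int list" where
  "fimg i = (if i = 1 then [1,2,0,0,0]
     else if i = 2 then [0,0,0,1,2]
     else if i = 3 then [0,1,2,0,0]
     else if i = 4 then [0,0,1,2,0]
     else if i = 5 then [0,0,0,1,1]
     else if i = 6 then [1,1,1,1,1] else [0,0,0,0,0])"

definition fhom :: "(nat \<Rightarrow> int) \<Rightarrow> int list" where
  "fhom b = map (\<lambda>k. (\<Sum>i=1..6. b i * fimg i ! k) mod 3) [0..<5]"

definition vform :: "int list \<Rightarrow> int list \<Rightarrow> int" where
  "vform x y = (\<Sum>k<5. x ! k * y ! k) mod 3"

definition Gamma_s :: "nat \<Rightarrow> int list set" where
  "Gamma_s s = fhom ` Delta_s s"

end

theory Submission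
  imports Defs
begin

lemma sq_bound:
  fixes c B :: int
  assumes "0 \<le> c" "c*c < (B+1)*(B+1)" "0 \<le> B"
  shows "c \<le> B"
proof (rule ccontr)
  assume "\<not> c \<le> B"
  hence "B+1 \<le> c" by simp
  hence "(B+1)*(B+1) \<le> c*c" using assms by (intro mult_mono) auto
  thus False using assms by simp
qed

definition qpoly :: "int \<Rightarrow> int \<Rightarrow> int \<Rightarrow> int \<Rightarrow> int \<Rightarrow> int \<Rightarrow> int" where
  "qpoly a1 a2 a3 a4 a5 a6 = 2*a1^2 + 2*a2^2 + 2*a3^2 + 2*a4^2 + 2*a5^2 + 2*a6^2 - 2*a1*a3 - 2*a3*a4 - 2*a4*a5 - 2*a5*a6 - 2*a2*a4"

lemma bnd1:
  fixes a1 a2 a3 a4 a5 a6 :: int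
  assumes "qpoly a1 a2 a3 a4 a5 a6 = 2" "0 \<le> a1"
  shows "a1 \<le> 1"
proof -
  have e: "4*qpoly a1 a2 a3 a4 a5 a6 = 2*((2)*a2 + (-1)*a4)^2 + 2*((2)*a3 + (-1)*a4 + (-1)*a1)^2 + 1*((2)*a4 + (-2)*a5 + (-1)*a1)^2 + 1*((2)*a5 + (-2)*a6 + (-1)*a1)^2 + 1*((2)*a6 + (-1)*a1)^2 + 3*a1^2"
    unfolding qpoly_def by (simp add: algebra_simps power2_eq_square)
  have n0: "0 \<le> 2*((2)*a2 + (-1)*a4)^2" by simp
  have n1: "0 \<le> 2*((2)*a3 + (-1)*a4 + (-1)*a1)^2" by simp
  have n2: "0 \<le> 1*((2)*a4 + (-2)*a5 + (-1)*a1)^2" by simp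
  have n3: "0 \<le> 1*((2)*a5 + (-2)*a6 + (-1)*a1)^2" by simp
  have n4: "0 \<le> 1*((2)*a6 + (-1)*a1)^2" by simp
  have "3*a1^2 \<le> 8" using e assms(1) n0 n1 n2 n3 n4 by linarith
  hence "a1*a1 < 2*2" unfolding power2_eq_square by linarith
  thus ?thesis using assms(2) sq_bound[of "a1" "1"] by simp
qed

lemma bnd2:
  fixes a1 a2 a3 a4 a5 a6 :: int
  assumes "qpoly a1 a2 a3 a4 a5 a6 = 2" "0 \<le> a2"
  shows "a2 \<le> 2"
proof -
  have e: "60*qpoly a1 a2 a3 a4 a5 a6 = 30*((2)*a1 + (-1)*a3)^2 + 10*((3)*a3 + (-2)*a4)^2 + 5*((4)*a4 + (-3)*a5 + (-3)*a2)^2 + 3*((5)*a5 + (-4)*a6 + (-3)*a2)^2 + 18*((2)*a6 + (-1)*a2)^2 + 30*a2^2"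
    unfolding qpoly_def by (simp add: algebra_simps power2_eq_square)
  have n0: "0 \<le> 30*((2)*a1 + (-1)*a3)^2" by simp
  have n1: "0 \<le> 10*((3)*a3 + (-2)*a4)^2" by simp
  have n2: "0 \<le> 5*((4)*a4 + (-3)*a5 + (-3)*a2)^2" by simp
  have n3: "0 \<le> 3*((5)*a5 + (-4)*a6 + (-3)*a2)^2" by simp
  have n4: "0 \<le> 18*((2)*a6 + (-1)*a2)^2" by simp
  have "30*a2^2 \<le> 120" using e assms(1) n0 n1 n2 n3 n4 by linarith
  hence "a2*a2 < 3*3" unfolding power2_eq_square by linarith
  thus ?thesis using assms(2) sq_bound[of "a2" "2"] by simp
qed

lemma bnd3:
  fixes a1 a2 a3 a4 a5 a6 :: int
  assumes "qpoly a1 a2 a3 a4 a5 a6 = 2" "0 \<le> a3"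
  shows "a3 \<le> 2"
proof -
  have e: "60*qpoly a1 a2 a3 a4 a5 a6 = 30*((2)*a1 + (-1)*a3)^2 + 30*((2)*a2 + (-1)*a4)^2 + 10*((3)*a4 + (-2)*a5 + (-2)*a3)^2 + 5*((4)*a5 + (-3)*a6 + (-2)*a3)^2 + 3*((5)*a6 + (-2)*a3)^2 + 18*a3^2"
    unfolding qpoly_def by (simp add: algebra_simps power2_eq_square)
  have n0: "0 \<le> 30*((2)*a1 + (-1)*a3)^2" by simp
  have n1: "0 \<le> 30*((2)*a2 + (-1)*a4)^2" by simp
  have n2: "0 \<le> 10*((3)*a4 + (-2)*a5 + (-2)*a3)^2" by simp
  have n3: "0 \<le> 5*((4)*a5 + (-3)*a6 + (-2)*a3)^2" by simp
  have n4: "0 \<le> 3*((5)*a6 + (-2)*a3)^2" by simp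
  have "18*a3^2 \<le> 120" using e assms(1) n0 n1 n2 n3 n4 by linarith
  hence "a3*a3 < 3*3" unfolding power2_eq_square by linarith
  thus ?thesis using assms(2) sq_bound[of "a3" "2"] by simp
qed

lemma bnd4:
  fixes a1 a2 a3 a4 a5 a6 :: int
  assumes "qpoly a1 a2 a3 a4 a5 a6 = 2" "0 \<le> a4"
  shows "a4 \<le> 3"
proof -
  have e: "6*qpoly a1 a2 a3 a4 a5 a6 = 3*((2)*a1 + (-1)*a3)^2 + 3*((2)*a2 + (-1)*a4)^2 + 1*((3)*a3 + (-2)*a4)^2 + 3*((2)*a5 + (-1)*a6 + (-1)*a4)^2 + 1*((3)*a6 + (-1)*a4)^2 + 1*a4^2"
    unfolding qpoly_def by (simp add: algebra_simps power2_eq_square)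
  have n0: "0 \<le> 3*((2)*a1 + (-1)*a3)^2" by simp
  have n1: "0 \<le> 3*((2)*a2 + (-1)*a4)^2" by simp
  have n2: "0 \<le> 1*((3)*a3 + (-2)*a4)^2" by simp
  have n3: "0 \<le> 3*((2)*a5 + (-1)*a6 + (-1)*a4)^2" by simp
  have n4: "0 \<le> 1*((3)*a6 + (-1)*a4)^2" by simp
  have "1*a4^2 \<le> 12" using e assms(1) n0 n1 n2 n3 n4 by linarith
  hence "a4*a4 < 4*4" unfolding power2_eq_square by linarith
  thus ?thesis using assms(2) sq_bound[of "a4" "3"] by simp
qed

lemma bnd5:
  fixes a1 a2 a3 a4 a5 a6 :: int
  assumes "qpoly a1 a2 a3 a4 a5 a6 = 2" "0 \<le> a5"
  shows "a5 \<le> 2"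
proof -
  have e: "30*qpoly a1 a2 a3 a4 a5 a6 = 15*((2)*a1 + (-1)*a3)^2 + 15*((2)*a2 + (-1)*a4)^2 + 5*((3)*a3 + (-2)*a4)^2 + 1*((5)*a4 + (-6)*a5)^2 + 15*((2)*a6 + (-1)*a5)^2 + 9*a5^2"
    unfolding qpoly_def by (simp add: algebra_simps power2_eq_square)
  have n0: "0 \<le> 15*((2)*a1 + (-1)*a3)^2" by simp
  have n1: "0 \<le> 15*((2)*a2 + (-1)*a4)^2" by simp
  have n2: "0 \<le> 5*((3)*a3 + (-2)*a4)^2" by simp
  have n3: "0 \<le> 1*((5)*a4 + (-6)*a5)^2" by simp
  have n4: "0 \<le> 15*((2)*a6 + (-1)*a5)^2" by simp
  have "9*a5^2 \<le> 60" using e assms(1) n0 n1 n2 n3 n4 by linarith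
  hence "a5*a5 < 3*3" unfolding power2_eq_square by linarith
  thus ?thesis using assms(2) sq_bound[of "a5" "2"] by simp
qed

lemma bnd6:
  fixes a1 a2 a3 a4 a5 a6 :: int
  assumes "qpoly a1 a2 a3 a4 a5 a6 = 2" "0 \<le> a6"
  shows "a6 \<le> 1"
proof -
  have e: "60*qpoly a1 a2 a3 a4 a5 a6 = 30*((2)*a1 + (-1)*a3)^2 + 30*((2)*a2 + (-1)*a4)^2 + 10*((3)*a3 + (-2)*a4)^2 + 2*((5)*a4 + (-6)*a5)^2 + 3*((4)*a5 + (-5)*a6)^2 + 45*a6^2"
    unfolding qpoly_def by (simp add: algebra_simps power2_eq_square)
  have n0: "0 \<le> 30*((2)*a1 + (-1)*a3)^2" by simp
  have n1: "0 \<le> 30*((2)*a2 + (-1)*a4)^2" by simp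
  have n2: "0 \<le> 10*((3)*a3 + (-2)*a4)^2" by simp
  have n3: "0 \<le> 2*((5)*a4 + (-6)*a5)^2" by simp
  have n4: "0 \<le> 3*((4)*a5 + (-5)*a6)^2" by simp
  have "45*a6^2 \<le> 120" using e assms(1) n0 n1 n2 n3 n4 by linarith
  hence "a6*a6 < 2*2" unfolding power2_eq_square by linarith
  thus ?thesis using assms(2) sq_bound[of "a6" "1"] by simp
qed

lemma six: "{1..6::nat} = {1,2,3,4,5,6}" by auto

lemma gram_tab:
  "gram 1 1 = 2" "gram 1 2 = 0" "gram 1 3 = -1" "gram 1 4 = 0" "gram 1 5 = 0" "gram 1 6 = 0"
  "gram 2 1 = 0" "gram 2 2 = 2" "gram 2 3 = 0" "gram 2 4 = -1" "gram 2 5 = 0" "gram 2 6 = 0"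
  "gram 3 1 = -1" "gram 3 2 = 0" "gram 3 3 = 2" "gram 3 4 = -1" "gram 3 5 = 0" "gram 3 6 = 0"
  "gram 4 1 = 0" "gram 4 2 = -1" "gram 4 3 = -1" "gram 4 4 = 2" "gram 4 5 = -1" "gram 4 6 = 0"
  "gram 5 1 = 0" "gram 5 2 = 0" "gram 5 3 = 0" "gram 5 4 = -1" "gram 5 5 = 2" "gram 5 6 = -1"
  "gram 6 1 = 0" "gram 6 2 = 0" "gram 6 3 = 0" "gram 6 4 = 0" "gram 6 5 = -1" "gram 6 6 = 2"
  unfolding gram_def by (auto simp: doubleton_eq_iff)

lemma lform_eq: "lform b b = qpoly (b 1) (b 2) (b 3) (b 4) (b 5) (b 6)"
  unfolding lform_def qpoly_def six by (simp add: gram_tab gram_tab[unfolded One_nat_def] algebra_simps power2_eq_square)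

definition RL :: "int list list" where "RL = [[0, 0, 0, 0, 0, 1], [0, 0, 0, 0, 1, 0], [0, 0, 0, 0, 1, 1], [0, 0, 0, 1, 0, 0], [0, 0, 0, 1, 1, 0], [0, 0, 0, 1, 1, 1], [0, 0, 1, 0, 0, 0], [0, 0, 1, 1, 0, 0], [0, 0, 1, 1, 1, 0], [0, 0, 1, 1, 1, 1], [0, 1, 0, 0, 0, 0], [0, 1, 0, 1, 0, 0], [0, 1, 0, 1, 1, 0], [0, 1, 0, 1, 1, 1], [0, 1, 1, 1, 0, 0], [0, 1, 1, 1, 1, 0], [0, 1, 1, 1, 1, 1], [0, 1, 1, 2, 1, 0], [0, 1, 1, 2, 1, 1], [0, 1, 1, 2, 2, 1], [1, 0, 0, 0, 0, 0], [1, 0, 1, 0, 0, 0], [1, 0, 1, 1, 0, 0], [1, 0, 1, 1, 1, 0], [1, 0, 1, 1, 1, 1], [1, 1, 1, 1, 0, 0], [1, 1, 1, 1, 1, 0], [1, 1, 1, 1, 1, 1], [1, 1, 1, 2, 1, 0], [1, 1, 1, 2, 1, 1], [1, 1, 1, 2, 2, 1], [1, 1, 2, 2, 1, 0], [1, 1, 2, 2, 1, 1], [1, 1, 2, 2, 2, 1], [1, 1, 2, 3, 2, 1], [1, 2, 2, 3, 2, 1]]"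

lemma box:
  fixes a1 a2 a3 a4 a5 a6 :: int
  assumes "qpoly a1 a2 a3 a4 a5 a6 = 2" "a1 \<in> {0,1}" "a2 \<in> {0,1,2}" "a3 \<in> {0,1,2}"
    "a4 \<in> {0,1,2,3}" "a5 \<in> {0,1,2}" "a6 \<in> {0,1}"
  shows "[a1,a2,a3,a4,a5,a6] \<in> set RL"
  using assms unfolding qpoly_def
  apply (simp only: insert_iff empty_iff simp_thms)
  apply (elim disjE)
  apply (simp_all add: RL_def)
  done


definition Ft :: "int list \<Rightarrow> int list" where
  "Ft t = [(t!0 + t!5) mod 3, (2*t!0 + t!2 + t!5) mod 3, (2*t!2 + t!3 + t!5) mod 3,
           (t!1 + 2*t!3 + t!4 + t!5) mod 3, (2*t!1 + t!4 + t!5) mod 3]"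

definition Mt :: "int list \<Rightarrow> nat" where
  "Mt t = (if t!5 \<noteq> 0 then 6 else if t!4 \<noteq> 0 then 5 else if t!3 \<noteq> 0 then 4
     else if t!2 \<noteq> 0 then 3 else if t!1 \<noteq> 0 then 2 else 1)"

definition GL3 :: "int list list" where "GL3 = [[0, 1, 2, 0, 0], [0, 0, 0, 1, 2], [1, 0, 2, 0, 0]]"
definition GL4 :: "int list list" where "GL4 = [[0, 0, 1, 2, 0], [0, 1, 0, 2, 0], [0, 0, 1, 0, 2], [0, 1, 0, 0, 2], [1, 0, 0, 2, 0], [1, 0, 0, 0, 2]]"
definition GL5 :: "int list list" where "GL5 = [[0, 0, 0, 1, 1], [0, 0, 1, 0, 1], [0, 1, 0, 0, 1], [0, 0, 1, 1, 0], [0, 1, 0, 1, 0], [0, 1, 1, 0, 0], [1, 0, 0, 0, 1], [1, 0, 0, 1, 0], [1, 0, 1, 0, 0], [1, 1, 0, 0, 0]]"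
definition GL6 :: "int list list" where "GL6 = [[1, 1, 1, 1, 1], [1, 1, 1, 2, 2], [1, 1, 2, 1, 2], [1, 2, 1, 1, 2], [1, 1, 2, 2, 1], [1, 2, 1, 2, 1], [1, 2, 2, 1, 1], [1, 2, 2, 2, 2], [2, 1, 1, 1, 2], [2, 1, 1, 2, 1], [2, 1, 2, 1, 1], [2, 1, 2, 2, 2], [2, 2, 1, 1, 1], [2, 2, 1, 2, 2], [2, 2, 2, 1, 2], [2, 2, 2, 2, 1]]"

lemma pos_tuple:
  assumes "b \<in> E6_pos_roots"
  shows "[b 1, b 2, b 3, b 4, b 5, b 6] \<in> set RL"
proof -
  have l: "lform b b = 2" and nn: "\<And>i. 0 \<le> b i"
    using assms unfolding E6_pos_roots_def E6_roots_def by auto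
  have q: "qpoly (b 1) (b 2) (b 3) (b 4) (b 5) (b 6) = 2" using l lform_eq by simp
  have u1: "b 1 \<le> 1" using bnd1[OF q nn] .
  have u2: "b 2 \<le> 2" using bnd2[OF q nn] .
  have u3: "b 3 \<le> 2" using bnd3[OF q nn] .
  have u4: "b 4 \<le> 3" using bnd4[OF q nn] .
  have u5: "b 5 \<le> 2" using bnd5[OF q nn] .
  have u6: "b 6 \<le> 1" using bnd6[OF q nn] .
  have r: "\<And>x::int. 0 \<le> x \<Longrightarrow> x \<le> 3 \<Longrightarrow> x \<in> {0,1,2,3}" by auto
  have r2: "\<And>x::int. 0 \<le> x \<Longrightarrow> x \<le> 2 \<Longrightarrow> x \<in> {0,1,2}" by auto
  have r1: "\<And>x::int. 0 \<le> x \<Longrightarrow> x \<le> 1 \<Longrightarrow> x \<in> {0,1}" by auto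
  show ?thesis
    by (rule box[OF q r1[OF nn u1] r2[OF nn u2] r2[OF nn u3] r[OF nn u4] r2[OF nn u5] r1[OF nn u6]])
qed

lemma fhom_eq: "fhom b = Ft [b 1, b 2, b 3, b 4, b 5, b 6]"
  unfolding fhom_def Ft_def fimg_def six by (simp add: upt_rec algebra_simps)

lemma collect_insert: "{i \<in> insert a A. P i} = (if P a then insert a {i\<in>A. P i} else {i\<in>A. P i})"
  by auto

lemma mroot_set: "{i \<in> {1..6}. b i \<noteq> 0} = set (filter (\<lambda>i. b i \<noteq> 0) [1,2,3,4,5,6::nat])"
  unfolding six by auto

lemma mroot_eq:
  assumes "[b 1, b 2, b 3, b 4, b 5, b 6] \<in> set RL"
  shows "mroot b = Mt [b 1, b 2, b 3, b 4, b 5, b 6]"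
  using assms unfolding mroot_def mroot_set RL_def
  apply (simp only: set_simps insert_iff empty_iff list.inject simp_thms)
  apply (elim disjE conjE)
  apply (simp_all add: Mt_def)
  done

lemma cls3: "t \<in> set RL \<Longrightarrow> Mt t \<in> {2,3} \<Longrightarrow> Ft t \<in> set GL3"
  unfolding RL_def
  apply (simp only: set_simps insert_iff empty_iff simp_thms)
  apply (elim disjE)
  apply (simp_all add: Mt_def Ft_def GL3_def)
  done
lemma cls4: "t \<in> set RL \<Longrightarrow> Mt t = 4 \<Longrightarrow> Ft t \<in> set GL4"
  unfolding RL_def
  apply (simp only: set_simps insert_iff empty_iff simp_thms)
  apply (elim disjE)
  apply (simp_all add: Mt_def Ft_def GL4_def)
  done
lemma cls5: "t \<in> set RL \<Longrightarrow> Mt t = 5 \<Longrightarrow> Ft t \<in> set GL5"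
  unfolding RL_def
  apply (simp only: set_simps insert_iff empty_iff simp_thms)
  apply (elim disjE)
  apply (simp_all add: Mt_def Ft_def GL5_def)
  done
lemma cls6: "t \<in> set RL \<Longrightarrow> Mt t = 6 \<Longrightarrow> Ft t \<in> set GL6"
  unfolding RL_def
  apply (simp only: set_simps insert_iff empty_iff simp_thms)
  apply (elim disjE)
  apply (simp_all add: Mt_def Ft_def GL6_def)
  done

lemma vform_eq: "vform x y = (x!0*y!0 + x!1*y!1 + x!2*y!2 + x!3*y!3 + x!4*y!4) mod 3"
  unfolding vform_def by (simp add: eval_nat_numeral lessThan_Suc algebra_simps)

lemma card_eq: "card {k \<in> {0..<5}. x ! k = y ! k} = length (filter (\<lambda>k. x ! k = y ! k) [0..<5])"
proof -
  have "{k \<in> {0..<5}. x ! k = y ! k} = set (filter (\<lambda>k. x ! k = y ! k) [0..<5])" (is "_ = set ?L") by auto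
  moreover have "distinct ?L" by simp
  ultimately show ?thesis using distinct_card by metis
qed

definition Pr :: "int list \<Rightarrow> int list \<Rightarrow> bool" where
  "Pr x y = (vform x y = 0 \<longleftrightarrow> length (filter (\<lambda>k. x ! k = y ! k) [0..<5]) = 1)"

lemma pr3: "\<forall>x\<in>set GL3. \<forall>y\<in>set GL3. x \<noteq> y \<longrightarrow> Pr x y"
  unfolding GL3_def Pr_def vform_eq by (simp add: upt_rec)
lemma pr4: "\<forall>x\<in>set GL4. \<forall>y\<in>set GL4. x \<noteq> y \<longrightarrow> Pr x y"
  unfolding GL4_def Pr_def vform_eq by (simp add: upt_rec)
lemma pr5: "\<forall>x\<in>set GL5. \<forall>y\<in>set GL5. x \<noteq> y \<longrightarrow> Pr x y"
  unfolding GL5_def Pr_def vform_eq by (simp add: upt_rec)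
lemma pr6: "\<forall>x\<in>set GL6. \<forall>y\<in>set GL6. x \<noteq> y \<longrightarrow> Pr x y"
  unfolding GL6_def Pr_def vform_eq by (simp add: upt_rec)

definition GLs :: "nat \<Rightarrow> int list list" where
  "GLs s = (if s = 3 then GL3 else if s = 4 then GL4 else if s = 5 then GL5 else GL6)"

lemma memGL:
  assumes "s \<in> {3,4,5,6}" "b \<in> Delta_s s"
  shows "fhom b \<in> set (GLs s)"
proof -
  have p: "b \<in> E6_pos_roots" and mc: "(s = 3 \<and> mroot b \<in> {2,3}) \<or> (s \<noteq> 3 \<and> mroot b = s)"
    using assms unfolding Delta_s_def by auto
  have t: "[b 1, b 2, b 3, b 4, b 5, b 6] \<in> set RL" by (rule pos_tuple[OF p])
  have m: "mroot b = Mt [b 1, b 2, b 3, b 4, b 5, b 6]" by (rule mroot_eq[OF t])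
  show ?thesis unfolding fhom_eq GLs_def
    using assms(1) mc m cls3[OF t] cls4[OF t] cls5[OF t] cls6[OF t] by auto
qed

lemma prGL: "s \<in> {3,4,5,6} \<Longrightarrow> x \<in> set (GLs s) \<Longrightarrow> y \<in> set (GLs s) \<Longrightarrow> x \<noteq> y \<Longrightarrow> Pr x y"
  unfolding GLs_def using pr3 pr4 pr5 pr6 by auto

theorem mainTheorem16:
  fixes s :: nat and x y :: "int list"
  assumes "s \<in> {1,3,4,5,6}"
    and "x \<in> Gamma_s s" and "y \<in> Gamma_s s" and "x \<noteq> y"
  shows "vform x y = 0 \<longleftrightarrow> card {k \<in> {0..<5}. x ! k = y ! k} = 1"
proof (cases "s = 1")
  case True
  then show ?thesis using assms(2,3,4) unfolding Gamma_s_def Delta_s_def by auto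
next
  case False
  hence s: "s \<in> {3,4,5,6}" using assms(1) by auto
  obtain b where b: "b \<in> Delta_s s" "x = fhom b" using assms(2) unfolding Gamma_s_def by auto
  obtain c where c: "c \<in> Delta_s s" "y = fhom c" using assms(3) unfolding Gamma_s_def by auto
  have "Pr x y" using prGL[OF s _ _ assms(4)] memGL[OF s b(1)] memGL[OF s c(1)] b(2) c(2) by simp
  thus ?thesis unfolding Pr_def card_eq .
qed

end
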